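(* Let $\mathcal S$ be a Sawtooth model with $n$ upper particles, let $1\le r\le n+1$, and let $\mathcal X$ be an event of positive probability in the $\sigma$-algebra generated by all the particles other than $X_r$. Then the conditional density $x\mapsto d_{X_r\mid\mathcal X}(x)$ is (a version of) a nonincreasing function on $[0,1]$. Similarly, for $1\le r\le n$ and $\mathcal X$ an event of positive probability generated by the particles other than $Y_r$, $y\mapsto d_{Y_r\mid\mathcal X}(y)$ is nondecreasing.
   Context: A (type $--$) Sawtooth model with $n\ge1$ upper particles is specified by functions $f_1,g_1,\dots,f_n,g_n:[0,1]\to[0,\infty)$, each nondecreasing, $C^1$ and not identically zero. It is the probability space $[0,1]^{n+1}\times[0,1]^n$ with probability density at $(x_1,\dots,x_{n+1},y_1,\dots,y_n)$ equal to $\frac{1}{\mathcal V}\prod_{i=1}^n\mathbf 1_{\{x_i\le y_i\}}\mathbf 1_{\{x_{i+1}\le y_i\}}f_i(y_i-x_i)\,g_i(y_i-x_{i+1})$, $\mathcal V$ being the normalizing constant. The coordinates $X_1,\dots,X_{n+1}$ are the lower particles and $Y_1,\dots,Y_n$ the upper particles (ordered $X_1,Y_1,X_2,\dots,Y_n,X_{n+1}$); $X_I:=X_1$, $X_F:=X_{n+1}$. Conditional densities $d_{U\mid\cdot}$ and conditional cumulative distribution functions $F_{U\mid V=v}(t)=\mathbb P(U\le t\mid V=v)$ are those computed from the joint density. *)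

theory Defs
  imports "HOL-Probability.Probability"
begin

datatype particle = Xp nat | Yp nat

definition particles :: "nat \<Rightarrow> particle set" where
  "particles n = Xp ` {1..n+1} \<union> Yp ` {1..n}"

definition config_space :: "nat \<Rightarrow> (particle \<Rightarrow> real) measure" where
  "config_space n = PiM (particles n) (\<lambda>_. lborel)"

definition sawtooth_weight ::
  "nat \<Rightarrow> (nat \<Rightarrow> real \<Rightarrow> real) \<Rightarrow> (nat \<Rightarrow> real \<Rightarrow> real) \<Rightarrow> (particle \<Rightarrow> real) \<Rightarrow> real" where
  "sawtooth_weight n f g \<omega> =
     (\<Prod>k\<in>particles n. indicator {0..1} (\<omega> k)) *
     (\<Prod>i\<in>{1..n}. indicator {p. fst p \<le> snd p} (\<omega> (Xp i), \<omega> (Yp i))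
                 * indicator {p. fst p \<le> snd p} (\<omega> (Xp (i+1)), \<omega> (Yp i))
                 * f i (\<omega> (Yp i) - \<omega> (Xp i)) * g i (\<omega> (Yp i) - \<omega> (Xp (i+1))))"

definition sawtooth_V ::
  "nat \<Rightarrow> (nat \<Rightarrow> real \<Rightarrow> real) \<Rightarrow> (nat \<Rightarrow> real \<Rightarrow> real) \<Rightarrow> ennreal" where
  "sawtooth_V n f g = (\<integral>\<^sup>+ \<omega>. ennreal (sawtooth_weight n f g \<omega>) \<partial>config_space n)"

definition sawtooth_measure ::
  "nat \<Rightarrow> (nat \<Rightarrow> real \<Rightarrow> real) \<Rightarrow> (nat \<Rightarrow> real \<Rightarrow> real) \<Rightarrow> (particle \<Rightarrow> real) measure" where
  "sawtooth_measure n f g =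
     density (config_space n) (\<lambda>\<omega>. ennreal (sawtooth_weight n f g \<omega>) / sawtooth_V n f g)"

definition admissible_fun :: "(real \<Rightarrow> real) \<Rightarrow> bool" where
  "admissible_fun h \<longleftrightarrow>
     (\<forall>t\<in>{0..1}. 0 \<le> h t) \<and> mono_on {0..1} h \<and>
     (\<exists>h'. continuous_on {0..1} h' \<and>
           (\<forall>t\<in>{0..1}. (h has_real_derivative h' t) (at t within {0..1}))) \<and>
     (\<exists>t\<in>{0..1}. h t \<noteq> 0)"

definition sawtooth_params ::
  "nat \<Rightarrow> (nat \<Rightarrow> real \<Rightarrow> real) \<Rightarrow> (nat \<Rightarrow> real \<Rightarrow> real) \<Rightarrow> bool" where
  "sawtooth_params n f g \<longleftrightarrow> (\<forall>i\<in>{1..n}. admissible_fun (f i) \<and> admissible_fun (g i))"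

definition other_events :: "nat \<Rightarrow> particle \<Rightarrow> (particle \<Rightarrow> real) set set" where
  "other_events n k =
     {{\<omega> \<in> space (config_space n). restrict \<omega> (particles n - {k}) \<in> A} | A.
        A \<in> sets (PiM (particles n - {k}) (\<lambda>_. lborel))}"

end

theory Submission
  imports Defs
begin


lemma finite_particles[simp]: "finite (particles n)"
  unfolding particles_def by auto

lemma phi_facts:
  assumes h: "admissible_fun h" and a: "a \<in> {0..1}" "b \<in> {0..1}"
  shows "0 \<le> indicator {p. fst p \<le> snd p} (a, b) * h (b - a)"
    and "indicator {p. fst p \<le> snd p} (a, b) * h (b - a) \<le> h 1"
proof -
  have h0: "\<forall>t\<in>{0..1}. 0 \<le> h t" and hm: "mono_on {0..1} h" using h by (auto simp: admissible_fun_def)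
  show "0 \<le> indicator {p. fst p \<le> snd p} (a, b) * h (b - a)"
    using a h0 by (auto simp: indicator_def)
  show "indicator {p. fst p \<le> snd p} (a, b) * h (b - a) \<le> h 1"
    using a h0 hm by (auto simp: indicator_def intro: mono_onD)
qed

lemma phi_mono:
  assumes h: "admissible_fun h" and a: "a1 \<in> {0..1}" "b1 \<in> {0..1}" "a2 \<in> {0..1}" "b2 \<in> {0..1}"
    and le: "a2 \<le> a1" "b1 \<le> b2"
  shows "indicator {p. fst p \<le> snd p} (a1, b1) * h (b1 - a1)
       \<le> indicator {p. fst p \<le> snd p} (a2, b2) * h (b2 - a2)"
proof -
  have h0: "\<forall>t\<in>{0..1}. 0 \<le> h t" and hm: "mono_on {0..1} h" using h by (auto simp: admissible_fun_def)
  show ?thesis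
  proof (cases "a1 \<le> b1")
    case True
    then have "h (b1 - a1) \<le> h (b2 - a2)" using a le by (intro mono_onD[OF hm]) auto
    then show ?thesis using True le by (auto simp: indicator_def)
  next
    case False
    then show ?thesis using phi_facts(1)[OF h a(3,4)] by (auto simp: indicator_def)
  qed
qed

definition F :: "(nat \<Rightarrow> real \<Rightarrow> real) \<Rightarrow> (nat \<Rightarrow> real \<Rightarrow> real) \<Rightarrow> nat \<Rightarrow> (particle \<Rightarrow> real) \<Rightarrow> real" where
  "F f g i \<omega> = (indicator {p. fst p \<le> snd p} (\<omega> (Xp i), \<omega> (Yp i)) * f i (\<omega> (Yp i) - \<omega> (Xp i)))
     * (indicator {p. fst p \<le> snd p} (\<omega> (Xp (i+1)), \<omega> (Yp i)) * g i (\<omega> (Yp i) - \<omega> (Xp (i+1))))"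

lemma W_eq: "sawtooth_weight n f g \<omega> = (\<Prod>k\<in>particles n. indicator {0..1} (\<omega> k)) * (\<Prod>i\<in>{1..n}. F f g i \<omega>)"
  unfolding sawtooth_weight_def F_def by (simp add: ac_simps)

lemma in_particles[simp]: "i \<in> {1..n} \<Longrightarrow> Xp i \<in> particles n" "i \<in> {1..n} \<Longrightarrow> Xp (Suc i) \<in> particles n"
   "i \<in> {1..n} \<Longrightarrow> Yp i \<in> particles n"
  unfolding particles_def by auto

lemma W_zero: "j \<in> particles n \<Longrightarrow> \<omega> j \<notin> {0..1} \<Longrightarrow> sawtooth_weight n f g \<omega> = 0"
proof -
  assume "j \<in> particles n" "\<omega> j \<notin> {0..1}"
  then have "(\<Prod>k\<in>particles n. indicator {0..1} (\<omega> k) :: real) = 0"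
    by (intro prod_zero) (auto intro!: bexI[of _ j])
  then show ?thesis unfolding W_eq by simp
qed

lemma ind_prod_one: "\<forall>j\<in>particles n. \<omega> j \<in> {0..1} \<Longrightarrow> (\<Prod>k\<in>particles n. indicator {0..1} (\<omega> k) :: real) = 1"
  by (intro prod.neutral) auto

lemma F_facts:
  assumes p: "sawtooth_params n f g" and i: "i \<in> {1..n}" and all: "\<forall>j\<in>particles n. \<omega> j \<in> {0..1}"
  shows "0 \<le> F f g i \<omega>" "F f g i \<omega> \<le> f i 1 * g i 1"
proof -
  have af: "admissible_fun (f i)" and ag: "admissible_fun (g i)" using p i by (auto simp: sawtooth_params_def)
  note A = phi_facts[OF af, of "\<omega> (Xp i)" "\<omega> (Yp i)"] phi_facts[OF ag, of "\<omega> (Xp (i+1))" "\<omega> (Yp i)"]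
  have m: "\<omega> (Xp i) \<in> {0..1}" "\<omega> (Yp i) \<in> {0..1}" "\<omega> (Xp (i+1)) \<in> {0..1}" using all i by auto
  show "0 \<le> F f g i \<omega>" unfolding F_def using A m by auto
  show "F f g i \<omega> \<le> f i 1 * g i 1" unfolding F_def using A m by (intro mult_mono) auto
qed

lemma W_nonneg: assumes p: "sawtooth_params n f g" shows "0 \<le> sawtooth_weight n f g \<omega>"
proof (cases "\<forall>j\<in>particles n. \<omega> j \<in> {0..1}")
  case True
  then show ?thesis unfolding W_eq using F_facts[OF p _ True] by (auto intro!: prod_nonneg simp: ind_prod_one)
next
  case False
  then show ?thesis using W_zero by fastforce
qed

lemma W_bound: assumes p: "sawtooth_params n f g"
  shows "sawtooth_weight n f g \<omega> \<le> (\<Prod>i\<in>{1..n}. f i 1 * g i 1)"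
proof (cases "\<forall>j\<in>particles n. \<omega> j \<in> {0..1}")
  case True
  then show ?thesis unfolding W_eq using F_facts[OF p _ True] by (auto intro!: prod_mono simp: ind_prod_one)
next
  case False
  have "0 \<le> (\<Prod>i\<in>{1..n}. f i 1 * g i 1)"
    using p by (auto intro!: prod_nonneg mult_nonneg_nonneg simp: sawtooth_params_def admissible_fun_def)
  then show ?thesis using False W_zero by fastforce
qed

lemma W_mono:
  assumes p: "sawtooth_params n f g"
    and all1: "\<forall>j\<in>particles n. \<omega>1 j \<in> {0..1}" and all2: "\<forall>j\<in>particles n. \<omega>2 j \<in> {0..1}"
    and X: "\<And>i. \<omega>2 (Xp i) \<le> \<omega>1 (Xp i)" and Y: "\<And>i. \<omega>1 (Yp i) \<le> \<omega>2 (Yp i)"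
  shows "sawtooth_weight n f g \<omega>1 \<le> sawtooth_weight n f g \<omega>2"
proof -
  have "F f g i \<omega>1 \<le> F f g i \<omega>2" if i: "i \<in> {1..n}" for i
  proof -
    have af: "admissible_fun (f i)" and ag: "admissible_fun (g i)" using p i by (auto simp: sawtooth_params_def)
    have m: "\<omega>1 (Xp i) \<in> {0..1}" "\<omega>1 (Yp i) \<in> {0..1}" "\<omega>1 (Xp (i+1)) \<in> {0..1}"
         "\<omega>2 (Xp i) \<in> {0..1}" "\<omega>2 (Yp i) \<in> {0..1}" "\<omega>2 (Xp (i+1)) \<in> {0..1}" using all1 all2 i by auto
    show ?thesis unfolding F_def
      apply (rule mult_mono)
      apply (rule phi_mono[OF af]; use m X Y in auto)
      apply (rule phi_mono[OF ag]; use m X Y in auto)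
      apply (rule phi_facts(1)[OF af]; use m in auto)
      apply (rule phi_facts(1)[OF ag]; use m in auto)
      done
  qed
  then show ?thesis unfolding W_eq using F_facts[OF p _ all1] all1 all2
    by (auto intro!: prod_mono simp: ind_prod_one)
qed



definition clamp :: "real \<Rightarrow> real" where "clamp t = max 0 (min 1 t)"

lemma adm_cont: assumes "admissible_fun h" shows "continuous_on {0..1} h"
proof -
  from assms obtain h' where d: "\<forall>t\<in>{0..1}. (h has_real_derivative h' t) (at t within {0..1})"
    unfolding admissible_fun_def by blast
  show ?thesis unfolding continuous_on_eq_continuous_within
    using d by (auto intro: DERIV_continuous)
qed

lemma adm_meas: assumes "admissible_fun h" shows "(\<lambda>t. h (clamp t)) \<in> borel_measurable borel"
proof -
  have "continuous_on UNIV (\<lambda>t. h (clamp t))"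
    unfolding clamp_def
    by (rule continuous_on_compose2[OF adm_cont[OF assms]]) (auto intro!: continuous_intros)
  then show ?thesis by (rule borel_measurable_continuous_onI)
qed

lemma W_clamp: "sawtooth_weight n f g \<omega> = (\<Prod>k\<in>particles n. indicator {0..1} (\<omega> k)) *
     (\<Prod>i\<in>{1..n}. indicator {p. fst p \<le> snd p} (\<omega> (Xp i), \<omega> (Yp i))
                 * indicator {p. fst p \<le> snd p} (\<omega> (Xp (i+1)), \<omega> (Yp i))
                 * f i (clamp (\<omega> (Yp i) - \<omega> (Xp i))) * g i (clamp (\<omega> (Yp i) - \<omega> (Xp (i+1)))))"
proof (cases "\<forall>j\<in>particles n. \<omega> j \<in> {0..1}")
  case True
  have "(\<Prod>i\<in>{1..n}. indicator {p. fst p \<le> snd p} (\<omega> (Xp i), \<omega> (Yp i))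
                 * indicator {p. fst p \<le> snd p} (\<omega> (Xp (i+1)), \<omega> (Yp i))
                 * f i (\<omega> (Yp i) - \<omega> (Xp i)) * g i (\<omega> (Yp i) - \<omega> (Xp (i+1)))) =
    (\<Prod>i\<in>{1..n}. indicator {p. fst p \<le> snd p} (\<omega> (Xp i), \<omega> (Yp i))
                 * indicator {p. fst p \<le> snd p} (\<omega> (Xp (i+1)), \<omega> (Yp i))
                 * f i (clamp (\<omega> (Yp i) - \<omega> (Xp i))) * g i (clamp (\<omega> (Yp i) - \<omega> (Xp (i+1)))))"
  proof (rule prod.cong[OF refl])
    fix i assume i: "i \<in> {1..n}"
    have m: "\<omega> (Xp i) \<in> {0..1}" "\<omega> (Yp i) \<in> {0..1}" "\<omega> (Xp (i+1)) \<in> {0..1}" using True i by auto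
    show "indicator {p. fst p \<le> snd p} (\<omega> (Xp i), \<omega> (Yp i))
                 * indicator {p. fst p \<le> snd p} (\<omega> (Xp (i+1)), \<omega> (Yp i))
                 * f i (\<omega> (Yp i) - \<omega> (Xp i)) * g i (\<omega> (Yp i) - \<omega> (Xp (i+1))) =
          indicator {p. fst p \<le> snd p} (\<omega> (Xp i), \<omega> (Yp i))
                 * indicator {p. fst p \<le> snd p} (\<omega> (Xp (i+1)), \<omega> (Yp i))
                 * f i (clamp (\<omega> (Yp i) - \<omega> (Xp i))) * g i (clamp (\<omega> (Yp i) - \<omega> (Xp (i+1))))"
      using m by (auto simp: indicator_def clamp_def)
  qed
  then show ?thesis unfolding sawtooth_weight_def by simp
next
  case False
  then obtain j where j: "j \<in> particles n" "\<omega> j \<notin> {0..1}" by auto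
  then have "(\<Prod>k\<in>particles n. indicator {0..1} (\<omega> k) :: real) = 0"
    by (intro prod_zero) (auto intro!: bexI[of _ j])
  then show ?thesis using W_zero[of j n \<omega> f g] j by simp
qed

lemma le_set_borel: "{p::real\<times>real. fst p \<le> snd p} \<in> sets borel"
  by (intro borel_closed closed_Collect_le continuous_intros)

lemma ind_le: "indicator {p. fst p \<le> snd p} (a, b) = (if a \<le> b then 1 else (0::real))"
  by (simp add: indicator_def)

lemma W_meas:
  assumes p: "sawtooth_params n f g"
  shows "sawtooth_weight n f g \<in> borel_measurable (config_space n)"
proof -
  have af: "\<And>i. i \<in> {1..n} \<Longrightarrow> (\<lambda>t. f i (clamp t)) \<in> borel_measurable borel"
   and ag: "\<And>i. i \<in> {1..n} \<Longrightarrow> (\<lambda>t. g i (clamp t)) \<in> borel_measurable borel"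
    using p by (auto intro!: adm_meas simp: sawtooth_params_def)
  note le_set_borel[measurable]
  show ?thesis
    unfolding W_clamp[abs_def] config_space_def ind_le
    apply (intro borel_measurable_times borel_measurable_prod)
    apply measurable
    apply (auto intro!: measurable_compose[OF _ af] measurable_compose[OF _ ag] borel_measurable_le measurable_component_singleton simp: pred_def)
    done
qed



lemma general:
  fixes n :: nat and f g :: "nat \<Rightarrow> real \<Rightarrow> real" and k :: particle
    and R :: "real \<Rightarrow> real \<Rightarrow> bool"
  assumes p: "sawtooth_params n f g" and k: "k \<in> particles n"
    and E: "E \<in> other_events n k" and pos: "measure (sawtooth_measure n f g) E > 0"
    and mono: "\<And>u x y. x \<in> {0..1} \<Longrightarrow> y \<in> {0..1} \<Longrightarrow> R x y \<Longrightarrow>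
        sawtooth_weight n f g (u(k := y)) \<le> sawtooth_weight n f g (u(k := x))"
  shows "\<exists>h :: real \<Rightarrow> real. distributed (uniform_measure (sawtooth_measure n f g) E) lborel
                 (\<lambda>\<omega>. \<omega> k) (\<lambda>x. ennreal (h x)) \<and> (\<forall>x. 0 \<le> h x) \<and>
           (\<forall>x y. x \<in> {0..1} \<longrightarrow> y \<in> {0..1} \<longrightarrow> R x y \<longrightarrow> h y \<le> h x)"
proof -
  interpret PS: product_sigma_finite "\<lambda>_::particle. lborel :: real measure" by standard
  define J where "J = particles n - {k}"
  define W where "W = sawtooth_weight n f g"
  define M where "M = sawtooth_measure n f g"
  define C where "C = config_space n"
  have fin: "finite J" unfolding J_def by simp
  have kJ: "k \<notin> J" unfolding J_def by simp
  have IJ: "insert k J = particles n" unfolding J_def using k by auto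
  have Cdef: "C = PiM (insert k J) (\<lambda>_. lborel)" unfolding C_def config_space_def IJ ..
  interpret PJ: sigma_finite_measure "PiM J (\<lambda>_::particle. lborel :: real measure)"
    by (rule PS.sigma_finite[OF fin])
  obtain A where A: "A \<in> sets (PiM J (\<lambda>_. lborel))"
    and Eeq: "E = {\<omega> \<in> space C. restrict \<omega> J \<in> A}"
    using E unfolding other_events_def J_def C_def by auto
  define V where "V = sawtooth_V n f g"
  define w where "w \<omega> = ennreal (W \<omega>) / V" for \<omega>
  have Wm[measurable]: "W \<in> borel_measurable C" unfolding W_def C_def by (rule W_meas[OF p])
  have wm[measurable]: "w \<in> borel_measurable C" unfolding w_def[abs_def] by measurable
  have Mdef: "M = density C w" unfolding M_def sawtooth_measure_def w_def C_def V_def W_def ..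
  have sets_M: "sets M = sets C" unfolding Mdef by simp
  have space_M: "space M = space C" unfolding Mdef by simp
  have Esets: "E \<in> sets C"
  proof -
    have "E = (\<lambda>\<omega>. restrict \<omega> J) -` A \<inter> space C" unfolding Eeq by auto
    also have "\<dots> \<in> sets C" unfolding C_def config_space_def
      by (rule measurable_sets[OF measurable_restrict_subset A]) (auto simp: J_def)
    finally show ?thesis .
  qed
  note Esets[measurable]
  define P where "P = emeasure M E"
  have P0: "P \<noteq> 0" and Pinf: "P \<noteq> \<infinity>"
    using pos unfolding P_def M_def[symmetric] measure_def by auto
  have V0: "V \<noteq> 0"
  proof
    assume V: "V = 0"
    have "AE \<omega> in C. ennreal (W \<omega>) = 0"
      using V unfolding V_def sawtooth_V_def W_def[symmetric] C_def[symmetric]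
      by (subst nn_integral_0_iff_AE[symmetric]) auto
    then have AE0: "AE \<omega> in C. w \<omega> * indicator E \<omega> = 0"
      by eventually_elim (simp add: w_def)
    have "P = (\<integral>\<^sup>+\<omega>. w \<omega> * indicator E \<omega> \<partial>C)" unfolding P_def Mdef
      by (rule emeasure_density[OF wm Esets])
    also have "\<dots> = (\<integral>\<^sup>+\<omega>. 0 \<partial>C)" by (rule nn_integral_cong_AE) (rule AE0)
    finally have "P = 0" by simp
    with P0 show False by simp
  qed
  define K where "K = (\<Prod>i\<in>{1..n}. f i 1 * g i 1)"
  define G where "G y u = w (u(k := y)) * indicator A u" for y u
  define D where "D y = (\<integral>\<^sup>+u. G y u \<partial>PiM J (\<lambda>_. lborel))" for y
  define h where "h y = enn2real (D y / P)" for y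
  have upd_space: "u(k := y) \<in> space C" if "u \<in> space (PiM J (\<lambda>_. lborel))" for u y
    using that unfolding Cdef by (auto simp: space_PiM PiE_def extensional_def)
  have restr: "restrict (u(k := y)) J = u" if "u \<in> space (PiM J (\<lambda>_. lborel))" for u y
    using that kJ by (auto simp: space_PiM PiE_def extensional_def fun_eq_iff)
  have Phi: "(\<lambda>p. (snd p)(k := fst p)) \<in> measurable (lborel \<Otimes>\<^sub>M PiM J (\<lambda>_. lborel)) C"
    unfolding Cdef by (rule measurable_fun_upd[where J=J]) auto
  have Gm: "case_prod G \<in> borel_measurable (lborel \<Otimes>\<^sub>M PiM J (\<lambda>_. lborel))"
  proof -
    have "case_prod G = (\<lambda>p. w ((\<lambda>p. (snd p)(k := fst p)) p) * indicator A (snd p))"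
      unfolding G_def by auto
    also have "\<dots> \<in> borel_measurable (lborel \<Otimes>\<^sub>M PiM J (\<lambda>_. lborel))"
    proof -
      have [measurable]: "(\<lambda>p. w ((\<lambda>p. (snd p)(k := fst p)) p)) \<in> borel_measurable (lborel \<Otimes>\<^sub>M PiM J (\<lambda>_. lborel))"
        by (rule measurable_compose[OF Phi wm])
      note A[measurable]
      show ?thesis by measurable
    qed
    finally show ?thesis .
  qed
  have Dm: "D \<in> borel_measurable lborel"
    unfolding D_def[abs_def] by (rule PJ.borel_measurable_nn_integral[OF Gm])
  have Gy: "G y \<in> borel_measurable (PiM J (\<lambda>_. lborel))" for y
  proof -
    have "(\<lambda>u. u(k := y)) \<in> measurable (PiM J (\<lambda>_. lborel)) C"
      unfolding Cdef by (rule measurable_fun_upd[where J=J]) auto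
    from measurable_compose[OF this wm] have [measurable]: "(\<lambda>u. w (u(k := y))) \<in> borel_measurable (PiM J (\<lambda>_. lborel))" .
    note A[measurable]
    show ?thesis unfolding G_def[abs_def] by measurable
  qed
  have key: "emeasure M (E \<inter> {\<omega> \<in> space C. \<omega> k \<in> B}) = (\<integral>\<^sup>+y. D y * indicator B y \<partial>lborel)"
    if B: "B \<in> sets borel" for B
  proof -
    define S where "S = E \<inter> {\<omega> \<in> space C. \<omega> k \<in> B}"
    have Sm: "S \<in> sets C" unfolding S_def using Esets B
      by (intro sets.Int) (auto simp: Cdef intro!: measurable_sets_Collect[OF measurable_component_singleton])
    have m2: "(\<lambda>\<omega>. w \<omega> * indicator S \<omega>) \<in> borel_measurable (PiM (insert k J) (\<lambda>_. lborel))"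
      using Sm wm unfolding Cdef by measurable
    have "emeasure M S = (\<integral>\<^sup>+\<omega>. w \<omega> * indicator S \<omega> \<partial>C)"
      unfolding Mdef by (rule emeasure_density[OF wm Sm])
    also have "\<dots> = (\<integral>\<^sup>+y. (\<integral>\<^sup>+u. w (u(k := y)) * indicator S (u(k := y)) \<partial>PiM J (\<lambda>_. lborel)) \<partial>lborel)"
      unfolding Cdef by (rule PS.product_nn_integral_insert_rev[OF fin kJ m2])
    also have "\<dots> = (\<integral>\<^sup>+y. D y * indicator B y \<partial>lborel)"
    proof (rule nn_integral_cong)
      fix y :: real
      have "(\<integral>\<^sup>+u. w (u(k := y)) * indicator S (u(k := y)) \<partial>PiM J (\<lambda>_. lborel))
          = (\<integral>\<^sup>+u. G y u * indicator B y \<partial>PiM J (\<lambda>_. lborel))"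
      proof (rule nn_integral_cong)
        fix u :: "particle \<Rightarrow> real" assume u: "u \<in> space (PiM J (\<lambda>_. lborel))"
        show "w (u(k := y)) * indicator S (u(k := y)) = G y u * indicator B y"
          using upd_space[OF u, of y] restr[OF u, of y]
          unfolding S_def Eeq G_def by (auto simp: indicator_def)
      qed
      also have "\<dots> = D y * indicator B y"
        unfolding D_def by (rule nn_integral_multc[OF Gy])
      finally show "(\<integral>\<^sup>+u. w (u(k := y)) * indicator S (u(k := y)) \<partial>PiM J (\<lambda>_. lborel)) = D y * indicator B y" .
    qed
    finally show ?thesis unfolding S_def .
  qed
  have Dbound: "D y \<le> ennreal K / V" for y
  proof -
    have "D y \<le> (\<integral>\<^sup>+u. (ennreal K / V) * indicator (PiE J (\<lambda>_. {0..1::real})) u \<partial>PiM J (\<lambda>_. lborel))"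
      unfolding D_def
    proof (rule nn_integral_mono)
      fix u :: "particle \<Rightarrow> real" assume u: "u \<in> space (PiM J (\<lambda>_. lborel))"
      show "G y u \<le> (ennreal K / V) * indicator (PiE J (\<lambda>_. {0..1::real})) u"
      proof (cases "u \<in> PiE J (\<lambda>_. {0..1})")
        case True
        have "G y u \<le> w (u(k := y))" unfolding G_def by (auto simp: indicator_def)
        also have "\<dots> \<le> ennreal K / V" unfolding w_def W_def K_def
          by (intro divide_right_mono_ennreal ennreal_leI W_bound[OF p])
        finally show ?thesis using True by simp
      next
        case False
        then obtain j where j: "j \<in> J" "u j \<notin> {0..1}"
          using u by (auto simp: space_PiM PiE_def Pi_def)
        have "W (u(k := y)) = 0" unfolding W_def
          by (rule W_zero[of j]) (use j kJ in \<open>auto simp: J_def\<close>)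
        then show ?thesis unfolding G_def w_def by simp
      qed
    qed
    also have "\<dots> = (ennreal K / V) * emeasure (PiM J (\<lambda>_. lborel)) (PiE J (\<lambda>_. {0..1::real}))"
      by (rule nn_integral_cmult_indicator) (auto intro!: sets_PiM_I_finite fin)
    also have "emeasure (PiM J (\<lambda>_. lborel)) (PiE J (\<lambda>_. {0..1::real})) = 1"
      by (subst PS.emeasure_PiM[OF fin]) auto
    finally show ?thesis by simp
  qed
  have Dfin: "D y / P \<noteq> \<infinity>" for y
  proof -
    have "ennreal K / V \<noteq> \<infinity>" using V0 by (simp add: ennreal_divide_eq_top_iff)
    then have "D y \<noteq> \<infinity>" using Dbound[of y] by (auto simp: top_unique)
    then show ?thesis using P0 Pinf by (simp add: ennreal_divide_eq_top_iff)
  qed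
  have hD: "ennreal (h y) = D y / P" for y
    unfolding h_def using Dfin[of y] by (simp add: ennreal_enn2real_if)
  have hmono: "h y \<le> h x" if xy: "x \<in> {0..1}" "y \<in> {0..1}" "R x y" for x y
  proof -
    have "D y \<le> D x" unfolding D_def
    proof (rule nn_integral_mono)
      fix u :: "particle \<Rightarrow> real"
      have "w (u(k := y)) \<le> w (u(k := x))" unfolding w_def W_def
        by (intro divide_right_mono_ennreal ennreal_leI mono xy)
      then show "G y u \<le> G x u" unfolding G_def by (rule mult_right_mono) simp
    qed
    then have "D y / P \<le> D x / P" by (rule divide_right_mono_ennreal)
    then show ?thesis unfolding h_def using Dfin[of x]
      by (intro enn2real_mono) (auto simp: top.not_eq_extremum)
  qed
  have Xm: "(\<lambda>\<omega>. \<omega> k) \<in> measurable C lborel" unfolding Cdef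
    by (rule measurable_component_singleton) simp
  have XmU: "(\<lambda>\<omega>. \<omega> k) \<in> measurable (uniform_measure M E) lborel"
    using Xm by (subst measurable_cong_sets[of _ C lborel lborel]) (simp_all add: sets_M)
  have hm: "(\<lambda>x. ennreal (h x)) \<in> borel_measurable lborel"
    unfolding hD using Dm by measurable
  have Esets': "E \<in> sets M" using Esets sets_M by simp
  have distr_eq: "distr (uniform_measure M E) lborel (\<lambda>\<omega>. \<omega> k) = density lborel (\<lambda>x. ennreal (h x))"
  proof (rule measure_eqI)
    fix B assume "B \<in> sets (distr (uniform_measure M E) lborel (\<lambda>\<omega>. \<omega> k))"
    then have B: "B \<in> sets borel" by simp
    have pre: "(\<lambda>\<omega>. \<omega> k) -` B \<inter> space (uniform_measure M E) = {\<omega> \<in> space C. \<omega> k \<in> B}"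
      by (auto simp: space_M)
    have pre_sets: "{\<omega> \<in> space C. \<omega> k \<in> B} \<in> sets M"
      using measurable_sets[OF Xm, of B] B sets_M by (simp add: vimage_def Int_def conj_commute)
    have "emeasure (distr (uniform_measure M E) lborel (\<lambda>\<omega>. \<omega> k)) B
        = emeasure (uniform_measure M E) {\<omega> \<in> space C. \<omega> k \<in> B}"
      using B pre by (subst emeasure_distr[OF XmU]) (simp_all add: space_M)
    also have "\<dots> = emeasure M (E \<inter> {\<omega> \<in> space C. \<omega> k \<in> B}) / P"
      unfolding P_def by (rule emeasure_uniform_measure[OF Esets' pre_sets])
    also have "\<dots> = (\<integral>\<^sup>+y. D y * indicator B y \<partial>lborel) * inverse P"
      unfolding key[OF B] divide_ennreal_def ..
    also have "\<dots> = (\<integral>\<^sup>+y. D y * indicator B y * inverse P \<partial>lborel)"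
      using B Dm by (intro nn_integral_multc[symmetric] borel_measurable_times) auto
    also have "\<dots> = (\<integral>\<^sup>+y. ennreal (h y) * indicator B y \<partial>lborel)"
      by (rule nn_integral_cong) (simp add: hD divide_ennreal_def ac_simps)
    also have "\<dots> = emeasure (density lborel (\<lambda>x. ennreal (h x))) B"
      using B hm by (subst emeasure_density) simp_all
    finally show "emeasure (distr (uniform_measure M E) lborel (\<lambda>\<omega>. \<omega> k)) B = emeasure (density lborel (\<lambda>x. ennreal (h x))) B" .
  qed simp
  show ?thesis
    unfolding M_def[symmetric]
    using distr_eq hm XmU hmono by (intro exI[of _ h]) (auto simp: distributed_def h_def)
qed



lemma W_upd_mono:
  assumes p: "sawtooth_params n f g" and xy: "x \<in> {0..1}" "y \<in> {0..1}"
    and X: "\<And>i. (u(k := x)) (Xp i) \<le> (u(k := y)) (Xp i)"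
    and Y: "\<And>i. (u(k := y)) (Yp i) \<le> (u(k := x)) (Yp i)"
  shows "sawtooth_weight n f g (u(k := y)) \<le> sawtooth_weight n f g (u(k := x))"
proof (cases "\<forall>j\<in>particles n. (u(k := x)) j \<in> {0..1}")
  case True
  then have T2: "\<forall>j\<in>particles n. (u(k := y)) j \<in> {0..1}" using xy by auto
  show ?thesis by (rule W_mono[OF p T2 True X Y])
next
  case False
  then obtain j where j: "j \<in> particles n" "(u(k := x)) j \<notin> {0..1}" by blast
  then have "j \<noteq> k" using xy by auto
  then have j2: "(u(k := y)) j \<notin> {0..1}" using j by simp
  show ?thesis using W_zero[of j n "u(k := x)" f g] W_zero[of j n "u(k := y)" f g] j j2 by simp
qed

theorem mainTheorem4:
  fixes n :: nat and f g :: "nat \<Rightarrow> real \<Rightarrow> real"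
  assumes "n \<ge> 1" and "sawtooth_params n f g"
  shows "(\<forall>r\<in>{1..n+1}. \<forall>E\<in>other_events n (Xp r).
            measure (sawtooth_measure n f g) E > 0 \<longrightarrow>
            (\<exists>h :: real \<Rightarrow> real.
               distributed (uniform_measure (sawtooth_measure n f g) E) lborel
                 (\<lambda>\<omega>. \<omega> (Xp r)) (\<lambda>x. ennreal (h x)) \<and>
               (\<forall>x. 0 \<le> h x) \<and>
               (\<forall>x y. 0 \<le> x \<longrightarrow> x \<le> y \<longrightarrow> y \<le> 1 \<longrightarrow> h y \<le> h x)))
       \<and> (\<forall>r\<in>{1..n}. \<forall>E\<in>other_events n (Yp r).
            measure (sawtooth_measure n f g) E > 0 \<longrightarrow>
            (\<exists>h :: real \<Rightarrow> real.
               distributed (uniform_measure (sawtooth_measure n f g) E) lborel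
                 (\<lambda>\<omega>. \<omega> (Yp r)) (\<lambda>x. ennreal (h x)) \<and>
               (\<forall>x. 0 \<le> h x) \<and>
               (\<forall>x y. 0 \<le> x \<longrightarrow> x \<le> y \<longrightarrow> y \<le> 1 \<longrightarrow> h x \<le> h y)))"
proof (intro conjI ballI impI)
  fix r E assume r: "r \<in> {1..n+1}" and E: "E \<in> other_events n (Xp r)"
    and pos: "measure (sawtooth_measure n f g) E > 0"
  have k: "Xp r \<in> particles n" using r unfolding particles_def by auto
  obtain h where h: "distributed (uniform_measure (sawtooth_measure n f g) E) lborel
                 (\<lambda>\<omega>. \<omega> (Xp r)) (\<lambda>x. ennreal (h x))" "\<forall>x. 0 \<le> h x"
    "\<forall>x y. x \<in> {0..1} \<longrightarrow> y \<in> {0..1} \<longrightarrow> x \<le> y \<longrightarrow> h y \<le> h x"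
    using general[OF assms(2) k E pos, of "\<lambda>x y. x \<le> y"]
      W_upd_mono[OF assms(2)] by fastforce
  show "\<exists>h :: real \<Rightarrow> real.
               distributed (uniform_measure (sawtooth_measure n f g) E) lborel
                 (\<lambda>\<omega>. \<omega> (Xp r)) (\<lambda>x. ennreal (h x)) \<and>
               (\<forall>x. 0 \<le> h x) \<and>
               (\<forall>x y. 0 \<le> x \<longrightarrow> x \<le> y \<longrightarrow> y \<le> 1 \<longrightarrow> h y \<le> h x)"
    using h by (intro exI[of _ h]) auto
next
  fix r E assume r: "r \<in> {1..n}" and E: "E \<in> other_events n (Yp r)"
    and pos: "measure (sawtooth_measure n f g) E > 0"
  have k: "Yp r \<in> particles n" using r unfolding particles_def by auto
  obtain h where h: "distributed (uniform_measure (sawtooth_measure n f g) E) lborel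
                 (\<lambda>\<omega>. \<omega> (Yp r)) (\<lambda>x. ennreal (h x))" "\<forall>x. 0 \<le> h x"
    "\<forall>x y. x \<in> {0..1} \<longrightarrow> y \<in> {0..1} \<longrightarrow> y \<le> x \<longrightarrow> h y \<le> h x"
    using general[OF assms(2) k E pos, of "\<lambda>x y. y \<le> x"]
      W_upd_mono[OF assms(2)] by fastforce
  show "\<exists>h :: real \<Rightarrow> real.
               distributed (uniform_measure (sawtooth_measure n f g) E) lborel
                 (\<lambda>\<omega>. \<omega> (Yp r)) (\<lambda>x. ennreal (h x)) \<and>
               (\<forall>x. 0 \<le> h x) \<and>
               (\<forall>x y. 0 \<le> x \<longrightarrow> x \<le> y \<longrightarrow> y \<le> 1 \<longrightarrow> h x \<le> h y)"
    using h by (intro exI[of _ h]) auto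
qed


end
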